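(* Let $s\ge 1$, let $\boldsymbol\xi=(\xi_1,\dots,\xi_\ell)$ consist of representatives of pairwise distinct nontrivial conjugacy classes of $\mathbb{F}_{q^m}$, let $\mathbf n=(n_1,\dots,n_\ell)$ be a length partition of $n$, and let $\boldsymbol\beta_1,\dots,\boldsymbol\beta_s\in\mathbb{F}_{q^m}^n$ be such that every block $\boldsymbol\beta_j^{(i)}\in\mathbb{F}_{q^m}^{n_i}$ has $\mathbb{F}_q$-linearly independent entries. Let $\mathbf c=(\mathbf c_1\mid\dots\mid\mathbf c_s)$ be a codeword of the HILRS code with these parameters and dimension $sk$, with message-polynomial vector $(f_1,\dots,f_s)$, i.e. $f_j\in\mathbb{F}_{q^m}[x;\theta,\delta]_{<k}$ and $\mathbf c_j=f_j(\boldsymbol\beta_j)_{\boldsymbol\xi}$ for all $j$. Let $\mathbf y=\mathbf c+\mathbf e\in\mathbb{F}_{q^m}^{sn}$, where $\mathbf e=(\mathbf e_1\mid\dots\mid\mathbf e_s)$ has sum-rank weight $t$ (with respect to the block-ordered partition), and let $\sigma\in\mathbb{F}_{q^m}[x;\theta,\delta]$ be the error-span polynomial of $\mathbf e$. For $j=1,\dots,s$ let $G_j$ be the minimal skew polynomial of $\boldsymbol\beta_j$ with respect to $\boldsymbol\xi$, and let $R_j$ be the interpolation polynomial with $\deg R_j<n$ and $R_j(\boldsymbol\beta_j)_{\boldsymbol\xi}=\mathbf y_j$. Then $$\sigma\cdot R_j\equiv \sigma\cdot f_j \bmod_r G_j\qquad\text{for all } j=1,\dots,s.$$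
   Context: Let $q$ be a prime power, $m\ge 1$, and $\theta$ an automorphism of $\mathbb{F}_{q^m}$ with fixed field $\mathbb{F}_q$. Let $\delta:\mathbb{F}_{q^m}\to\mathbb{F}_{q^m}$ be a $\theta$-derivation, i.e. $\delta(a+b)=\delta(a)+\delta(b)$ and $\delta(ab)=\delta(a)b+\theta(a)\delta(b)$. Elements $a,b\in\mathbb{F}_{q^m}$ are conjugate if $b=\theta(c)ac^{-1}+\delta(c)c^{-1}$ for some $c\ne0$; the conjugacy class of $0$ is called trivial. The skew polynomial ring $\mathbb{F}_{q^m}[x;\theta,\delta]$ consists of polynomials $\sum_i f_ix^{i-1}$ ($f_i\in\mathbb{F}_{q^m}$, finitely many nonzero) with ordinary addition and multiplication determined by $xa=\theta(a)x+\delta(a)$; $\mathbb{F}_{q^m}[x;\theta,\delta]_{<k}$ is the set of those of degree $<k$. For $g\neq 0$, $f\bmod_r g$ denotes the unique $r$ with $\deg r<\deg g$ and $f=Qg+r$ for some $Q$ (right division), and $f\equiv h\bmod_r g$ means $f\bmod_r g=h\bmod_r g$. For $a,b\in\mathbb{F}_{q^m}$ set $\mathcal D_a(b):=\theta(b)a+\delta(b)$, $\mathcal D_a^0(b)=b$, $\mathcal D_a^i(b)=\mathcal D_a(\mathcal D_a^{i-1}(b))$. The generalized operator evaluation of $f=\sum_{i=1}^d f_ix^{i-1}$ at $b$ with respect to $a$ is $f(b)_a:=\sum_{i=1}^d f_i\mathcal D_a^{i-1}(b)$. A length partition of $n$ is $\mathbf n=(n_1,\dots,n_\ell)$ of positive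 integers with sum $n$; a vector $\mathbf x\in\mathbb{F}_{q^m}^n$ is written in blocks $\mathbf x=(\mathbf x^{(1)}\mid\dots\mid\mathbf x^{(\ell)})$, $\mathbf x^{(i)}\in\mathbb{F}_{q^m}^{n_i}$, and for $\mathbf a=(a_1,\dots,a_\ell)$ one writes $f(\mathbf x)_{\mathbf a}:=(f(\mathbf x^{(1)})_{a_1}\mid\dots\mid f(\mathbf x^{(\ell)})_{a_\ell})$ (entrywise evaluation in each block). The LRS code $\mathrm{LRS}[\boldsymbol\beta,\boldsymbol\xi;\mathbf n,k]$ is $\{f(\boldsymbol\beta)_{\boldsymbol\xi}: f\in\mathbb{F}_{q^m}[x;\theta,\delta]_{<k}\}$; the HILRS code of interleaving order $s$ with code locators $(\boldsymbol\beta_1\mid\dots\mid\boldsymbol\beta_s)$ and dimension $sk$ is $\{(\mathbf c_1\mid\dots\mid\mathbf c_s)\in\mathbb{F}_{q^m}^{sn}:\mathbf c_j\in\mathrm{LRS}[\boldsymbol\beta_j,\boldsymbol\xi;\mathbf n,k]\ \forall j\}$. For $\mathbf x=(\mathbf x_1\mid\dots\mid\mathbf x_s)\in\mathbb{F}_{q^m}^{sn}$ with each $\mathbf x_j$ split in blocks according to $\mathbf n$, its sum-rank weight (block-ordered partition) is $\mathrm{wt}_{\Sigma R}(\mathbf x)=\sum_{i=1}^\ell\mathrm{rk}_q(\mathbf x_1^{(i)}\mid\dots\mid\mathbf x_s^{(i)})$, where $\mathrm{rk}_q$ is the maximal number of $\mathbb{F}_q$-linearly independent entries. Error decomposition: if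 $t_i=\mathrm{rk}_q(\mathbf e_1^{(i)}\mid\dots\mid\mathbf e_s^{(i)})$, there are $\mathbf a^{(i)}\in\mathbb{F}_{q^m}^{t_i}$ with $\mathbb{F}_q$-linearly independent entries and $\mathbf B_j^{(i)}\in\mathbb{F}_q^{t_i\times n_i}$ with $\mathrm{rk}(\mathbf B_1^{(i)}\mid\dots\mid\mathbf B_s^{(i)})=t_i$ and $\mathbf e_j^{(i)}=\mathbf a^{(i)}\mathbf B_j^{(i)}$ for all $i,j$; the entries of $\mathbf a^{(i)}$ are the error values. The error-span polynomial $\sigma$ is the monic nonzero skew polynomial of least degree with $\sigma(\mathbf a^{(i)})_{\xi_i}=\mathbf 0$ for all $i=1,\dots,\ell$. The minimal skew polynomial of $\boldsymbol\beta_j$ with respect to $\boldsymbol\xi$ is the monic nonzero skew polynomial $G_j$ of least degree with $G_j(\boldsymbol\beta_j^{(i)})_{\xi_i}=\mathbf 0$ for all $i$. *)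

theory Defs
  imports "HOL-Computational_Algebra.Polynomial"
begin

text \<open>The field F_{q^m} is a finite field type 'a; theta is a field automorphism of it and
  F_q is by definition its fixed field.\<close>

definition is_field_aut :: "('a::field \<Rightarrow> 'a) \<Rightarrow> bool" where
  "is_field_aut \<theta> \<longleftrightarrow> bij \<theta> \<and> (\<forall>a b. \<theta> (a + b) = \<theta> a + \<theta> b) \<and>
     (\<forall>a b. \<theta> (a * b) = \<theta> a * \<theta> b) \<and> \<theta> 1 = 1"

definition fixed_field :: "('a \<Rightarrow> 'a) \<Rightarrow> 'a set" where
  "fixed_field \<theta> = {a. \<theta> a = a}"

definition is_theta_derivation :: "('a::field \<Rightarrow> 'a) \<Rightarrow> ('a \<Rightarrow> 'a) \<Rightarrow> bool" where
  "is_theta_derivation \<theta> \<delta> \<longleftrightarrow> (\<forall>a b. \<delta> (a + b) = \<delta> a + \<delta> b) \<and>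
     (\<forall>a b. \<delta> (a * b) = \<delta> a * b + \<theta> a * \<delta> b)"

definition skew_conj :: "('a::field \<Rightarrow> 'a) \<Rightarrow> ('a \<Rightarrow> 'a) \<Rightarrow> 'a \<Rightarrow> 'a \<Rightarrow> bool" where
  "skew_conj \<theta> \<delta> a b \<longleftrightarrow> (\<exists>c. c \<noteq> 0 \<and> b = \<theta> c * a * inverse c + \<delta> c * inverse c)"

text \<open>A skew polynomial is represented by its coefficient sequence, stored in the library
  type 'a poly (used only as a container for coefficients: addition, degree, coefficients).
  The skew product is defined separately via the rule x a = theta(a) x + delta(a).\<close>

definition skew_lmul_x :: "('a::field \<Rightarrow> 'a) \<Rightarrow> ('a \<Rightarrow> 'a) \<Rightarrow> 'a poly \<Rightarrow> 'a poly" where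
  "skew_lmul_x \<theta> \<delta> p = pCons 0 (map_poly \<theta> p) + map_poly \<delta> p"

definition skew_mult :: "('a::field \<Rightarrow> 'a) \<Rightarrow> ('a \<Rightarrow> 'a) \<Rightarrow> 'a poly \<Rightarrow> 'a poly \<Rightarrow> 'a poly" where
  "skew_mult \<theta> \<delta> p q = (\<Sum>i\<le>degree p. smult (coeff p i) ((skew_lmul_x \<theta> \<delta> ^^ i) q))"

definition skew_rmod :: "('a::field \<Rightarrow> 'a) \<Rightarrow> ('a \<Rightarrow> 'a) \<Rightarrow> 'a poly \<Rightarrow> 'a poly \<Rightarrow> 'a poly" where
  "skew_rmod \<theta> \<delta> f g = (THE r. (r = 0 \<or> degree r < degree g) \<and>
                                 (\<exists>Q. f = skew_mult \<theta> \<delta> Q g + r))"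

definition skew_rcong :: "('a::field \<Rightarrow> 'a) \<Rightarrow> ('a \<Rightarrow> 'a) \<Rightarrow> 'a poly \<Rightarrow> 'a poly \<Rightarrow> 'a poly \<Rightarrow> bool" where
  "skew_rcong \<theta> \<delta> f h g \<longleftrightarrow> skew_rmod \<theta> \<delta> f g = skew_rmod \<theta> \<delta> h g"

definition skew_D :: "('a::field \<Rightarrow> 'a) \<Rightarrow> ('a \<Rightarrow> 'a) \<Rightarrow> 'a \<Rightarrow> 'a \<Rightarrow> 'a" where
  "skew_D \<theta> \<delta> a b = \<theta> b * a + \<delta> b"

definition op_eval :: "('a::field \<Rightarrow> 'a) \<Rightarrow> ('a \<Rightarrow> 'a) \<Rightarrow> 'a poly \<Rightarrow> 'a \<Rightarrow> 'a \<Rightarrow> 'a" where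
  "op_eval \<theta> \<delta> f b a = (\<Sum>i\<le>degree f. coeff f i * (skew_D \<theta> \<delta> a ^^ i) b)"

definition is_min_annihilator :: "('a::field \<Rightarrow> 'a) \<Rightarrow> ('a \<Rightarrow> 'a) \<Rightarrow> ('a \<times> 'a) set \<Rightarrow> 'a poly \<Rightarrow> bool" where
  "is_min_annihilator \<theta> \<delta> S p \<longleftrightarrow>
     lead_coeff p = 1 \<and> (\<forall>(b, a) \<in> S. op_eval \<theta> \<delta> p b a = 0) \<and>
     (\<forall>g. g \<noteq> 0 \<longrightarrow> (\<forall>(b, a) \<in> S. op_eval \<theta> \<delta> g b a = 0) \<longrightarrow> degree p \<le> degree g)"

definition Fq_indep_family :: "('a::field \<Rightarrow> 'a) \<Rightarrow> nat \<Rightarrow> (nat \<Rightarrow> 'a) \<Rightarrow> bool" where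
  "Fq_indep_family \<theta> k v \<longleftrightarrow>
     (\<forall>c. (\<forall>r<k. c r \<in> fixed_field \<theta>) \<and> (\<Sum>r<k. c r * v r) = 0 \<longrightarrow> (\<forall>r<k. c r = 0))"

definition Fq_indep_set :: "('a::field \<Rightarrow> 'a) \<Rightarrow> 'a set \<Rightarrow> bool" where
  "Fq_indep_set \<theta> A \<longleftrightarrow>
     (\<forall>c. (\<forall>x\<in>A. c x \<in> fixed_field \<theta>) \<and> (\<Sum>x\<in>A. c x * x) = 0 \<longrightarrow> (\<forall>x\<in>A. c x = 0))"

text \<open>rk_q of a collection of entries (given by its finite set of values): the maximal number of
  F_q-linearly independent entries.\<close>
definition rk_q :: "('a::{field,finite} \<Rightarrow> 'a) \<Rightarrow> 'a set \<Rightarrow> nat" where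
  "rk_q \<theta> V = Max (card ` {B. B \<subseteq> V \<and> Fq_indep_set \<theta> B})"

end

theory Submission imports Defs begin

lemma card_zero: "of_nat (card (UNIV::'a set)) = (0::'a::{field,finite})"
proof -
  have b: "bij (\<lambda>x::'a. x + 1)"
    by (rule bij_betw_byWitness[where f'="\<lambda>x. x - 1"]) auto
  have "(\<Sum>x\<in>UNIV. x + 1) = (\<Sum>x\<in>UNIV. (x::'a))"
    using sum.reindex_bij_betw[OF b, of "\<lambda>x. x"] by simp
  then show ?thesis by (simp add: sum.distrib)
qed

lemma fermat: "(x::'a::{field,finite}) ^ card (UNIV::'a set) = x"
proof (cases "x = 0")
  case True
  have "card (UNIV::'a set) > 0" by (rule finite_UNIV_card_ge_0) simp
  then show ?thesis using True by (simp add: power_0_left)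
next
  case False
  define S where "S = UNIV - {0::'a}"
  have b: "bij_betw (\<lambda>y. x * y) S S"
    unfolding S_def using False
    by (intro bij_betw_byWitness[where f'="\<lambda>y. y / x"]) auto
  have "(\<Prod>y\<in>S. x * y) = (\<Prod>y\<in>S. y)"
    using prod.reindex_bij_betw[OF b, of "\<lambda>y. y"] by simp
  moreover have "(\<Prod>y\<in>S. x * y) = x ^ card S * (\<Prod>y\<in>S. y)"
    by (simp add: prod.distrib)
  moreover have "(\<Prod>y\<in>S. y) \<noteq> 0" unfolding S_def by simp
  ultimately have "x ^ card S = 1" by simp
  moreover have "card S = card (UNIV::'a set) - 1" unfolding S_def by (simp add: card_Diff_singleton)
  moreover have "card (UNIV::'a set) > 0" by (rule finite_UNIV_card_ge_0) simp
  ultimately show ?thesis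
    by (metis Suc_diff_1 mult.right_neutral power_Suc)
qed


locale skew =
  fixes \<theta> \<delta> :: "'a::{field,finite} \<Rightarrow> 'a"
  assumes aut: "is_field_aut \<theta>" and der: "is_theta_derivation \<theta> \<delta>"
begin

lemma th_add: "\<theta> (x + y) = \<theta> x + \<theta> y" using aut unfolding is_field_aut_def by blast
lemma th_mult: "\<theta> (x * y) = \<theta> x * \<theta> y" using aut unfolding is_field_aut_def by blast
lemma th1: "\<theta> 1 = 1" using aut unfolding is_field_aut_def by blast
lemma th_inj: "inj \<theta>" using aut unfolding is_field_aut_def bij_def by blast
lemma th0: "\<theta> 0 = 0" using th_add[of 0 0] by (metis add.right_neutral add_left_cancel)
lemma th_eq0: "\<theta> x = 0 \<longleftrightarrow> x = 0" using th_inj th0 by (metis injD)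
lemma de_add: "\<delta> (x + y) = \<delta> x + \<delta> y" using der unfolding is_theta_derivation_def by blast
lemma de_mult: "\<delta> (x * y) = \<delta> x * y + \<theta> x * \<delta> y" using der unfolding is_theta_derivation_def by blast
lemma de0: "\<delta> 0 = 0" using de_add[of 0 0] by (metis add.right_neutral add_left_cancel)
lemma de1: "\<delta> 1 = 0" using de_mult[of 1 1] th1 by (metis add.right_neutral add_left_cancel mult_1 mult_1_right)

lemma de_pow: "\<theta> c = c \<Longrightarrow> \<delta> (c ^ Suc n) = of_nat (Suc n) * c ^ n * \<delta> c"
proof (induction n)
  case 0 then show ?case by simp
next
  case (Suc n)
  have "\<delta> (c ^ Suc (Suc n)) = \<delta> (c * c ^ Suc n)" by simp
  also have "\<dots> = \<delta> c * c ^ Suc n + c * (of_nat (Suc n) * c ^ n * \<delta> c)"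
    using de_mult Suc by simp
  also have "\<dots> = of_nat (Suc (Suc n)) * c ^ Suc n * \<delta> c"
    by (simp add: algebra_simps)
  finally show ?case .
qed

lemma de_fixed: assumes "c \<in> fixed_field \<theta>" shows "\<delta> c = 0"
proof -
  have tc: "\<theta> c = c" using assms unfolding fixed_field_def by simp
  obtain n where n: "card (UNIV::'a set) = Suc n"
    using finite_UNIV_card_ge_0[where 'a='a] by (metis finite_UNIV gr0_implies_Suc)
  have "\<delta> c = \<delta> (c ^ Suc n)" using fermat[of c] n by metis
  also have "\<dots> = 0" using de_pow[OF tc, of n] card_zero[where 'a='a] n by simp
  finally show ?thesis .
qed

abbreviation D where "D a \<equiv> skew_D \<theta> \<delta> a"
abbreviation X where "X \<equiv> skew_lmul_x \<theta> \<delta>"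
abbreviation M where "M \<equiv> skew_mult \<theta> \<delta>"
abbreviation ev where "ev \<equiv> op_eval \<theta> \<delta>"

lemma D_add: "D a (x + y) = D a x + D a y"
  by (simp add: skew_D_def th_add de_add algebra_simps)
lemma D0: "D a 0 = 0" by (simp add: skew_D_def th0 de0)
lemma D_mult: "D a (c * b) = \<theta> c * D a b + \<delta> c * b"
  by (simp only: skew_D_def th_mult de_mult) (simp add: algebra_simps)
lemma Dp_add: "(D a ^^ i) (x + y) = (D a ^^ i) x + (D a ^^ i) y"
  by (induction i) (simp_all add: D_add)
lemma Dp0: "(D a ^^ i) 0 = 0"
  by (induction i) (simp_all add: D0)
lemma Dp_fixed: "c \<in> fixed_field \<theta> \<Longrightarrow> (D a ^^ i) (c * x) = c * (D a ^^ i) x"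
  by (induction i) (simp_all add: D_mult de_fixed, simp add: fixed_field_def)
lemma D_sum: "D a (\<Sum>i\<in>A. g i) = (\<Sum>i\<in>A. D a (g i))"
  by (induction A rule: infinite_finite_induct) (simp_all add: D0 D_add)

lemma ev_bound: "degree p \<le> N \<Longrightarrow> ev p b a = (\<Sum>i\<le>N. coeff p i * (D a ^^ i) b)"
  unfolding op_eval_def
  by (rule sum.mono_neutral_left) (auto simp: coeff_eq_0)

lemma ev_add: "ev (p + q) b a = ev p b a + ev q b a"
proof -
  let ?N = "max (degree p) (degree q)"
  have "degree (p + q) \<le> ?N" by (rule degree_add_le) auto
  then show ?thesis
    by (simp add: ev_bound[of _ ?N] sum.distrib algebra_simps)
qed

lemma ev_diff: "ev (p - q) b a = ev p b a - ev q b a"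
  using ev_add[of "p - q" q b a] by simp

lemma ev_0: "ev 0 b a = 0" by (simp add: op_eval_def)

lemma ev_smult: "ev (smult c p) b a = c * ev p b a"
  using ev_bound[of "smult c p" "degree p"] unfolding op_eval_def
  by (simp add: sum_distrib_left mult.assoc)

lemma ev_sum: "ev (\<Sum>i\<in>A. g i) b a = (\<Sum>i\<in>A. ev (g i) b a)"
  by (induction A rule: infinite_finite_induct) (simp_all add: ev_0 ev_add)

lemma ev_at0: "ev p 0 a = 0" by (simp add: op_eval_def Dp0)

lemma ev_badd: "ev p (x + y) a = ev p x a + ev p y a"
  by (simp add: op_eval_def Dp_add sum.distrib algebra_simps)

lemma ev_bfixed: "c \<in> fixed_field \<theta> \<Longrightarrow> ev p (c * x) a = c * ev p x a"
  by (simp add: op_eval_def Dp_fixed sum_distrib_left algebra_simps)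

lemma ev_bsum: "(\<forall>u\<in>A. c u \<in> fixed_field \<theta>) \<Longrightarrow> ev p (\<Sum>u\<in>A. c u * x u) a = (\<Sum>u\<in>A. c u * ev p (x u) a)"
  by (induction A rule: infinite_finite_induct) (simp_all add: ev_at0 ev_badd ev_bfixed)

lemma coeff_X: "coeff (X p) i = (case i of 0 \<Rightarrow> 0 | Suc j \<Rightarrow> \<theta> (coeff p j)) + \<delta> (coeff p i)"
  by (simp add: skew_lmul_x_def coeff_pCons coeff_map_poly th0 de0 split: nat.split)

lemma degree_X: "degree (X p) \<le> Suc (degree p)"
  by (rule degree_le) (auto simp: coeff_X coeff_eq_0 th0 de0 split: nat.split)

lemma ev_X: "ev (X q) b a = D a (ev q b a)"
proof -
  let ?d = "degree q"
  have "ev (X q) b a = (\<Sum>i\<le>Suc ?d. coeff (X q) i * (D a ^^ i) b)"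
    by (rule ev_bound[OF degree_X])
  also have "\<dots> = (\<Sum>i\<le>Suc ?d. (case i of 0 \<Rightarrow> 0 | Suc j \<Rightarrow> \<theta> (coeff q j)) * (D a ^^ i) b)
                 + (\<Sum>i\<le>Suc ?d. \<delta> (coeff q i) * (D a ^^ i) b)"
    by (simp add: coeff_X sum.distrib algebra_simps)
  also have "(\<Sum>i\<le>Suc ?d. (case i of 0 \<Rightarrow> 0 | Suc j \<Rightarrow> \<theta> (coeff q j)) * (D a ^^ i) b)
     = (\<Sum>i\<le>?d. \<theta> (coeff q i) * (D a ^^ Suc i) b)"
    by (subst sum.atMost_Suc_shift) simp
  also have "(\<Sum>i\<le>Suc ?d. \<delta> (coeff q i) * (D a ^^ i) b) = (\<Sum>i\<le>?d. \<delta> (coeff q i) * (D a ^^ i) b)"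
    by (simp add: coeff_eq_0 de0)
  also have "(\<Sum>i\<le>?d. \<theta> (coeff q i) * (D a ^^ Suc i) b) + (\<Sum>i\<le>?d. \<delta> (coeff q i) * (D a ^^ i) b)
      = (\<Sum>i\<le>?d. D a (coeff q i * (D a ^^ i) b))"
    by (simp add: D_mult sum.distrib)
  also have "\<dots> = D a (ev q b a)" by (simp add: op_eval_def D_sum)
  finally show ?thesis .
qed

lemma ev_Xp: "ev ((X ^^ i) q) b a = (D a ^^ i) (ev q b a)"
  by (induction i) (simp_all add: ev_X)

lemma M_bound: "degree p \<le> N \<Longrightarrow> M p q = (\<Sum>i\<le>N. smult (coeff p i) ((X ^^ i) q))"
  unfolding skew_mult_def
  by (rule sum.mono_neutral_left) (auto simp: coeff_eq_0)

lemma ev_M: "ev (M p q) b a = ev p (ev q b a) a"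
proof -
  have "ev (M p q) b a = (\<Sum>i\<le>degree p. coeff p i * (D a ^^ i) (ev q b a))"
    unfolding skew_mult_def by (simp only: ev_sum ev_smult ev_Xp)
  then show ?thesis by (simp only: op_eval_def[of _ _ p])
qed

lemma M_add1: "M (p + p') q = M p q + M p' q"
proof -
  let ?N = "max (degree p) (degree p')"
  have "degree (p + p') \<le> ?N" by (rule degree_add_le) auto
  then show ?thesis
    by (simp add: M_bound[of _ ?N] sum.distrib smult_add_left)
qed

lemma M_diff1: "M (p - p') q = M p q - M p' q"
  using M_add1[of "p - p'" p' q] by simp

lemma M_0: "M 0 q = 0" by (simp add: skew_mult_def)

lemma X_add: "X (p + q) = X p + X q"
  by (rule poly_eqI) (simp add: coeff_X th_add de_add split: nat.split)

lemma Xp_add: "(X ^^ i) (p + q) = (X ^^ i) p + (X ^^ i) q"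
  by (induction i) (simp_all add: X_add)

lemma M_add2: "M p (q + q') = M p q + M p q'"
  by (simp add: skew_mult_def Xp_add smult_add_right sum.distrib)

lemma M_diff2: "M p (q - q') = M p q - M p q'"
  using M_add2[of p "q - q'" q'] by simp

lemma X_monic: "lead_coeff p = 1 \<Longrightarrow> degree (X p) = Suc (degree p) \<and> lead_coeff (X p) = 1"
proof -
  assume l: "lead_coeff p = 1"
  have c: "coeff (X p) (Suc (degree p)) = 1"
    by (simp add: coeff_X l th1 coeff_eq_0 de0)
  then have "degree (X p) = Suc (degree p)"
    using degree_X le_degree[of "X p"] by (metis le_antisym one_neq_zero)
  with c show ?thesis by simp
qed

lemma Xp_monic: "lead_coeff p = 1 \<Longrightarrow> degree ((X ^^ i) p) = degree p + i \<and> lead_coeff ((X ^^ i) p) = 1"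
proof (induction i)
  case 0 then show ?case by simp
next
  case (Suc i)
  then have "lead_coeff ((X ^^ i) p) = 1" "degree ((X ^^ i) p) = degree p + i" by auto
  note A = X_monic[OF this(1)]
  have "degree ((X ^^ Suc i) p) = degree p + Suc i" using A \<open>degree ((X ^^ i) p) = degree p + i\<close> by simp
  moreover have "lead_coeff ((X ^^ Suc i) p) = 1" unfolding funpow.simps(2) o_apply using A by (rule conjunct2)
  ultimately show ?case by blast
qed

lemma M_monom: "M (monom c k) G = smult c ((X ^^ k) G)"
proof -
  have "M (monom c k) G = (\<Sum>i\<le>k. smult (coeff (monom c k) i) ((X ^^ i) G))"
    by (rule M_bound) (simp add: degree_monom_le)
  also have "\<dots> = (\<Sum>i\<le>k. if i = k then smult c ((X ^^ k) G) else 0)"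
    by (rule sum.cong) (auto simp: coeff_monom)
  finally show ?thesis by simp
qed

lemma coeff_M_top:
  assumes G: "lead_coeff G = 1" and Q: "Q \<noteq> 0"
  shows "coeff (M Q G) (degree G + degree Q) = lead_coeff Q"
proof -
  have "coeff (M Q G) (degree G + degree Q)
     = (\<Sum>i\<le>degree Q. coeff Q i * coeff ((X ^^ i) G) (degree G + degree Q))"
    by (simp add: skew_mult_def coeff_sum)
  also have "\<dots> = (\<Sum>i\<le>degree Q. if i = degree Q then lead_coeff Q else 0)"
  proof (rule sum.cong)
    fix i assume i: "i \<in> {..degree Q}"
    show "coeff Q i * coeff ((X ^^ i) G) (degree G + degree Q) = (if i = degree Q then lead_coeff Q else 0)"
    proof (cases "i = degree Q")
      case True
      have "coeff ((X ^^ i) G) (degree G + degree Q) = 1"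
        using Xp_monic[OF G, of i] True by metis
      then show ?thesis using True by simp
    next
      case False
      then have "degree ((X ^^ i) G) < degree G + degree Q" using i Xp_monic[OF G, of i] by auto
      then show ?thesis using False by (simp add: coeff_eq_0)
    qed
  qed simp
  finally show ?thesis by simp
qed

lemma div_exists:
  assumes G: "lead_coeff G = 1"
  shows "\<exists>Q r. h = M Q G + r \<and> (r = 0 \<or> degree r < degree G)"
proof (induction "degree h" arbitrary: h rule: less_induct)
  case less
  show ?case
  proof (cases "h = 0 \<or> degree h < degree G")
    case True
    then show ?thesis by (intro exI[of _ 0] exI[of _ h]) (auto simp: M_0)
  next
    case False
    then have h0: "h \<noteq> 0" and dh: "degree G \<le> degree h" by auto
    define k where "k = degree h - degree G"
    define c where "c = lead_coeff h"
    define h' where "h' = h - smult c ((X ^^ k) G)"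
    have XG: "degree ((X ^^ k) G) = degree h" "lead_coeff ((X ^^ k) G) = 1"
      using Xp_monic[OF G, of k] dh k_def by auto
    have cXG: "coeff ((X ^^ k) G) (degree h) = 1" using XG by metis
    have hsplit: "h = M (monom c k) G + h'" by (simp add: h'_def M_monom)
    have "h' = 0 \<or> degree h' < degree h"
    proof (rule ccontr)
      assume "\<not> ?thesis"
      then have nz: "h' \<noteq> 0" and ge: "degree h \<le> degree h'" by auto
      have "degree h' \<le> degree h" unfolding h'_def
        by (rule order.trans[OF degree_diff_le_max]) (auto simp: XG intro: order.trans[OF degree_smult_le])
      with ge have "degree h' = degree h" by simp
      moreover have "coeff h' (degree h) = 0" by (simp add: h'_def cXG c_def)
      ultimately show False using nz by (metis leading_coeff_0_iff)
    qed
    then show ?thesis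
    proof
      assume "h' = 0"
      then show ?thesis using hsplit by (intro exI[of _ "monom c k"] exI[of _ 0]) simp
    next
      assume "degree h' < degree h"
      from less[OF this] obtain Q r where "h' = M Q G + r" "r = 0 \<or> degree r < degree G" by blast
      then show ?thesis using hsplit
        by (intro exI[of _ "monom c k + Q"] exI[of _ r]) (simp add: M_add1)
    qed
  qed
qed

lemma div_unique:
  assumes G: "lead_coeff G = 1"
    and e: "M Q G + r = M Q' G + r'"
    and r: "r = 0 \<or> degree r < degree G" and r': "r' = 0 \<or> degree r' < degree G"
  shows "r = r'"
proof (cases "Q = Q'")
  case True then show ?thesis using e by simp
next
  case False
  let ?P = "Q - Q'"
  have P0: "?P \<noteq> 0" using False by simp
  have "M ?P G = r' - r" using e by (simp add: M_diff1 algebra_simps)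
  then have "coeff (r' - r) (degree G + degree ?P) = lead_coeff ?P"
    using coeff_M_top[OF G P0] by metis
  moreover have "lead_coeff ?P \<noteq> 0" using P0 leading_coeff_0_iff by blast
  moreover have "coeff (r' - r) (degree G + degree ?P) = 0"
    using r r' by (auto simp: coeff_eq_0)
  ultimately show ?thesis by simp
qed

lemma rmod_eq:
  assumes G: "lead_coeff G = 1" and "f = M Q G + r" and "r = 0 \<or> degree r < degree G"
  shows "skew_rmod \<theta> \<delta> f G = r"
  unfolding skew_rmod_def
proof (rule the_equality)
  show "(r = 0 \<or> degree r < degree G) \<and> (\<exists>Q. f = M Q G + r)" using assms by blast
next
  fix r' assume "(r' = 0 \<or> degree r' < degree G) \<and> (\<exists>Q. f = M Q G + r')"
  then obtain Q' where "f = M Q' G + r'" "r' = 0 \<or> degree r' < degree G" by blast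
  then show "r' = r" using div_unique[OF G, of Q' r' Q r] assms by simp
qed

end

theorem theorem1:
  fixes \<theta> \<delta> :: "'a::{field,finite} \<Rightarrow> 'a"
    and s l n k t :: nat
    and nn :: "nat \<Rightarrow> nat"
    and \<xi> :: "nat \<Rightarrow> 'a"
    and \<beta> e :: "nat \<Rightarrow> nat \<Rightarrow> nat \<Rightarrow> 'a"
    and f R G :: "nat \<Rightarrow> 'a poly"
    and \<sigma> :: "'a poly"
    and tt :: "nat \<Rightarrow> nat"
    and a :: "nat \<Rightarrow> nat \<Rightarrow> 'a"
    and B :: "nat \<Rightarrow> nat \<Rightarrow> nat \<Rightarrow> nat \<Rightarrow> 'a"
  assumes aut: "is_field_aut \<theta>"
    and der: "is_theta_derivation \<theta> \<delta>"
    and s_pos: "s \<ge> 1"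
    and xi_nontriv: "\<forall>i<l. \<not> skew_conj \<theta> \<delta> 0 (\<xi> i)"
    and xi_distinct: "\<forall>i<l. \<forall>i'<l. i \<noteq> i' \<longrightarrow> \<not> skew_conj \<theta> \<delta> (\<xi> i) (\<xi> i')"
    and partition: "\<forall>i<l. nn i > 0" "n = (\<Sum>i<l. nn i)"
    and beta_indep: "\<forall>j<s. \<forall>i<l. Fq_indep_family \<theta> (nn i) (\<beta> j i)"
    and f_deg: "\<forall>j<s. f j = 0 \<or> degree (f j) < k"
    \<comment> \<open>error weight and error decomposition\<close>
    and tt_def: "\<forall>i<l. tt i = rk_q \<theta> {e j i r | j r. j < s \<and> r < nn i}"
    and wt: "t = (\<Sum>i<l. tt i)"
    and a_indep: "\<forall>i<l. Fq_indep_family \<theta> (tt i) (a i)"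
    and B_Fq: "\<forall>j<s. \<forall>i<l. \<forall>u<tt i. \<forall>r<nn i. B j i u r \<in> fixed_field \<theta>"
    and B_rank: "\<forall>i<l. \<forall>c. (\<forall>u<tt i. c u \<in> fixed_field \<theta>) \<and>
                   (\<forall>j<s. \<forall>r<nn i. (\<Sum>u<tt i. c u * B j i u r) = 0) \<longrightarrow> (\<forall>u<tt i. c u = 0)"
    and e_decomp: "\<forall>j<s. \<forall>i<l. \<forall>r<nn i. e j i r = (\<Sum>u<tt i. a i u * B j i u r)"
    \<comment> \<open>error-span polynomial\<close>
    and sigma: "is_min_annihilator \<theta> \<delta> {(a i u, \<xi> i) | i u. i < l \<and> u < tt i} \<sigma>"
    \<comment> \<open>minimal skew polynomials of the code locators\<close>
    and G: "\<forall>j<s. is_min_annihilator \<theta> \<delta> {(\<beta> j i r, \<xi> i) | i r. i < l \<and> r < nn i} (G j)"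
    \<comment> \<open>interpolation polynomials of the received word y = c + e, c_j = f_j(beta_j)_xi\<close>
    and R_deg: "\<forall>j<s. R j = 0 \<or> degree (R j) < n"
    and R_interp: "\<forall>j<s. \<forall>i<l. \<forall>r<nn i.
                     op_eval \<theta> \<delta> (R j) (\<beta> j i r) (\<xi> i)
                       = op_eval \<theta> \<delta> (f j) (\<beta> j i r) (\<xi> i) + e j i r"
  shows "\<forall>j<s. skew_rcong \<theta> \<delta> (skew_mult \<theta> \<delta> \<sigma> (R j)) (skew_mult \<theta> \<delta> \<sigma> (f j)) (G j)"
proof (intro allI impI)
  fix j assume j: "j < s"
  interpret skew \<theta> \<delta> using aut der by unfold_locales
  let ?S = "{(\<beta> j i r, \<xi> i) | i r. i < l \<and> r < nn i}"
  have Gm: "lead_coeff (G j) = 1"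
    and Gv: "\<forall>(b, a) \<in> ?S. op_eval \<theta> \<delta> (G j) b a = 0"
    and Gmin: "\<forall>g. g \<noteq> 0 \<longrightarrow> (\<forall>(b, a) \<in> ?S. op_eval \<theta> \<delta> g b a = 0) \<longrightarrow> degree (G j) \<le> degree g"
    using G j unfolding is_min_annihilator_def by blast+
  have sv: "op_eval \<theta> \<delta> \<sigma> (a i u) (\<xi> i) = 0" if "i < l" "u < tt i" for i u
    using sigma that unfolding is_min_annihilator_def by blast
  define h where "h = skew_mult \<theta> \<delta> \<sigma> (R j - f j)"
  obtain Q r where hQ: "h = skew_mult \<theta> \<delta> Q (G j) + r" and rd: "r = 0 \<or> degree r < degree (G j)"
    using div_exists[OF Gm] by blast
  have rv: "\<forall>(b, a) \<in> ?S. op_eval \<theta> \<delta> r b a = 0"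
  proof (intro ballI, clarify)
    fix i r' assume i: "i < l" and r': "r' < nn i"
    let ?b = "\<beta> j i r'" and ?x = "\<xi> i"
    have "op_eval \<theta> \<delta> (skew_mult \<theta> \<delta> Q (G j)) ?b ?x = 0"
    proof -
      have "op_eval \<theta> \<delta> (G j) ?b ?x = 0" using Gv i r' by blast
      then show ?thesis by (simp add: ev_M ev_at0)
    qed
    moreover have "op_eval \<theta> \<delta> h ?b ?x = 0"
    proof -
      have "op_eval \<theta> \<delta> (R j - f j) ?b ?x = e j i r'"
        using R_interp j i r' by (simp add: ev_diff)
      also have "\<dots> = (\<Sum>u<tt i. B j i u r' * a i u)"
        using e_decomp j i r' by (simp add: mult.commute)
      finally have "op_eval \<theta> \<delta> h ?b ?x = op_eval \<theta> \<delta> \<sigma> (\<Sum>u<tt i. B j i u r' * a i u) ?x"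
        by (simp add: h_def ev_M)
      also have "\<dots> = (\<Sum>u<tt i. B j i u r' * op_eval \<theta> \<delta> \<sigma> (a i u) ?x)"
        using B_Fq j i r' by (intro ev_bsum) auto
      also have "\<dots> = 0" using sv i by simp
      finally show ?thesis .
    qed
    moreover have "r = h - skew_mult \<theta> \<delta> Q (G j)" using hQ by simp
    ultimately show "op_eval \<theta> \<delta> r ?b ?x = 0" by (simp add: ev_diff)
  qed
  have r0: "r = 0"
  proof (rule ccontr)
    assume "r \<noteq> 0"
    with Gmin rv have "degree (G j) \<le> degree r" by blast
    with rd \<open>r \<noteq> 0\<close> show False by simp
  qed
  obtain Q1 r1 where f1: "skew_mult \<theta> \<delta> \<sigma> (f j) = skew_mult \<theta> \<delta> Q1 (G j) + r1"
    and rd1: "r1 = 0 \<or> degree r1 < degree (G j)"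
    using div_exists[OF Gm] by blast
  have "skew_mult \<theta> \<delta> \<sigma> (R j) = skew_mult \<theta> \<delta> \<sigma> (f j) + h"
    by (simp add: h_def M_diff2)
  also have "\<dots> = skew_mult \<theta> \<delta> (Q1 + Q) (G j) + r1"
    using f1 hQ r0 by (simp add: M_add1 algebra_simps)
  finally have R1: "skew_mult \<theta> \<delta> \<sigma> (R j) = skew_mult \<theta> \<delta> (Q1 + Q) (G j) + r1" .
  show "skew_rcong \<theta> \<delta> (skew_mult \<theta> \<delta> \<sigma> (R j)) (skew_mult \<theta> \<delta> \<sigma> (f j)) (G j)"
    unfolding skew_rcong_def using rmod_eq[OF Gm R1 rd1] rmod_eq[OF Gm f1 rd1] by simp
qed

end
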